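(* Suppose $0<\delta < \frac{8}{5} g^{-k-3} k^{-2}$. Then for every $\vec \theta \in R_{\delta}^A$ we have $|\Phi(\vec \theta)| \leq 1 - \frac{1}{10} g^{-k-2}$.
   Context: Let $g\ge 2$, $k\ge 2$ be integers, $\mathbb Z_g$ the integers mod $g$, and $d=\binom{k}{2}(g-1)$. Index the coordinates of $\mathbb R^d$ by pairs $(\{i,j\},a)$ with $1\le i<j\le k$ and $a\in\mathbb Z_g\setminus\{0\}$. Define $Z:(\mathbb Z_g)^k\to\mathbb R^d$ by $[Z(\vec x)]_{\{i,j\},a}=1-1/g$ if $x_i-x_j=a$ and $-1/g$ otherwise. Define $\Phi(\vec\theta)=\sum_{\vec x\in(\mathbb Z_g)^k} g^{-k}e^{i\vec\theta\cdot Z(\vec x)}$, $\Lambda=\{\vec\theta\in\mathbb R^d: |\Phi(\vec\theta)|=1\}$, $\Lambda_0=\Lambda\cap[-\pi,\pi)^d$. For $\vec\theta\in[-\pi,\pi)^d$ and $\delta>0$ let $B_\delta(\vec\theta)=\{\vec\mu\in[-\pi,\pi)^d: \vec\mu\equiv\vec\theta+\vec\zeta \pmod{2\pi}$ componentwise, for some $\vec\zeta$ with $|\zeta_{\{i,j\},a}|<\delta$ for all coordinates$\}$. Let $L=\{\vec\theta\in[-\pi,\pi)^d: \theta_{\{i,j\},a}\equiv 0 \pmod{2\pi/g}$ for all coordinates$\}$ and $R_\delta^A=\bigcup_{\vec\eta\in L\setminus\Lambda_0}B_\delta(\vec\eta)$. *)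

theory Defs
  imports "HOL-Analysis.Analysis"
begin

text \<open>Coordinates of R^d are indexed by triples (i,j,a) with 1 <= i < j <= k and
  a in {1..g-1} (the nonzero residues mod g). Vectors are real-valued functions
  on this index set.\<close>

definition coord_idx :: "nat \<Rightarrow> nat \<Rightarrow> (nat \<times> nat \<times> nat) set" where
  "coord_idx g k = {(i, j, a). 1 \<le> i \<and> i < j \<and> j \<le> k \<and> 1 \<le> a \<and> a \<le> g - 1}"

text \<open>Elements of (Z_g)^k: functions on {1..k} with values in {0..<g} (representatives).\<close>
definition Zg_vecs :: "nat \<Rightarrow> nat \<Rightarrow> (nat \<Rightarrow> int) set" where
  "Zg_vecs g k = PiE {1..k} (\<lambda>_. {0..<int g})"

definition Zmap :: "nat \<Rightarrow> (nat \<Rightarrow> int) \<Rightarrow> nat \<times> nat \<times> nat \<Rightarrow> real" where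
  "Zmap g x c = (case c of (i, j, a) \<Rightarrow>
     (if (x i - x j) mod int g = int a mod int g then 1 - 1 / real g else - 1 / real g))"

definition Phi :: "nat \<Rightarrow> nat \<Rightarrow> (nat \<times> nat \<times> nat \<Rightarrow> real) \<Rightarrow> complex" where
  "Phi g k \<theta> = (\<Sum>x\<in>Zg_vecs g k. complex_of_real (1 / real g ^ k) *
      cis (\<Sum>c\<in>coord_idx g k. \<theta> c * Zmap g x c))"

definition cube :: "nat \<Rightarrow> nat \<Rightarrow> (nat \<times> nat \<times> nat \<Rightarrow> real) set" where
  "cube g k = PiE (coord_idx g k) (\<lambda>_. {-pi..<pi})"

definition Lambda0 :: "nat \<Rightarrow> nat \<Rightarrow> (nat \<times> nat \<times> nat \<Rightarrow> real) set" where
  "Lambda0 g k = {\<theta> \<in> cube g k. norm (Phi g k \<theta>) = 1}"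

definition Bdelta :: "nat \<Rightarrow> nat \<Rightarrow> real \<Rightarrow> (nat \<times> nat \<times> nat \<Rightarrow> real) \<Rightarrow> (nat \<times> nat \<times> nat \<Rightarrow> real) set" where
  "Bdelta g k \<delta> \<theta> = {\<mu> \<in> cube g k. \<exists>\<zeta>. \<forall>c\<in>coord_idx g k.
      \<bar>\<zeta> c\<bar> < \<delta> \<and> (\<exists>m::int. \<mu> c = \<theta> c + \<zeta> c + 2 * pi * of_int m)}"

definition Lgrid :: "nat \<Rightarrow> nat \<Rightarrow> (nat \<times> nat \<times> nat \<Rightarrow> real) set" where
  "Lgrid g k = {\<theta> \<in> cube g k. \<forall>c\<in>coord_idx g k. \<exists>m::int. \<theta> c = 2 * pi * of_int m / real g}"

definition RA :: "nat \<Rightarrow> nat \<Rightarrow> real \<Rightarrow> (nat \<times> nat \<times> nat \<Rightarrow> real) set" where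
  "RA g k \<delta> = (\<Union>\<eta>\<in>Lgrid g k - Lambda0 g k. Bdelta g k \<delta> \<eta>)"

end

theory Submission
  imports Defs
begin

lemma cis_sum_abs: "norm (cis a + cis b) = 2 * \<bar>cos ((a - b)/2)\<bar>"
proof -
  have "cis a + cis b = cis ((a+b)/2) * (cis ((a-b)/2) + cis (-((a-b)/2)))"
    by (simp add: distrib_left cis_mult field_simps)
  also have "cis ((a-b)/2) + cis (-((a-b)/2)) = complex_of_real (2 * cos ((a-b)/2))"
    by (simp add: complex_eq_iff)
  finally show ?thesis by (simp add: norm_mult)
qed

lemma cis_diff_abs: "norm (cis a - cis b) = 2 * \<bar>sin ((a - b)/2)\<bar>"
proof -
  have "cis a - cis b = cis ((a+b)/2) * (cis ((a-b)/2) - cis (-((a-b)/2)))"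
    by (simp add: right_diff_distrib cis_mult field_simps)
  also have "cis ((a-b)/2) - cis (-((a-b)/2)) = \<i> * complex_of_real (2 * sin ((a-b)/2))"
    by (simp add: complex_eq_iff)
  finally show ?thesis by (simp add: norm_mult)
qed

lemma cis_diff_le: "norm (cis a - cis b) \<le> \<bar>a - b\<bar>"
  using abs_sin_x_le_abs_x[of "(a-b)/2"] by (simp add: cis_diff_abs)

lemma cis_sum_le: "norm (cis a + cis b) \<le> 2 - (sin ((a - b)/2))\<^sup>2"
proof -
  let ?y = "(a-b)/2"
  have c: "(cos ?y)\<^sup>2 = 1 - (sin ?y)\<^sup>2" by (simp add: cos_squared_eq)
  have "\<bar>cos ?y\<bar> \<le> 1 - (sin ?y)\<^sup>2 / 2"
  proof -
    have s: "(sin ?y)\<^sup>2 \<le> 1" by (simp add: sin_squared_eq)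
    define S where "S = (sin ?y)\<^sup>2"
    have S0: "0 \<le> S" unfolding S_def by simp
    have "\<bar>cos ?y\<bar>\<^sup>2 = 1 - S" using c unfolding S_def by simp
    also have "\<dots> \<le> (1 - S / 2)\<^sup>2"
    proof -
      have "(1 - S / 2)\<^sup>2 = 1 - S + S * S / 4" by (simp add: power2_eq_square algebra_simps)
      moreover have "0 \<le> S * S" using S0 by simp
      ultimately show ?thesis by linarith
    qed
    finally have "\<bar>cos ?y\<bar>\<^sup>2 \<le> (1 - S / 2)\<^sup>2" .
    moreover have "0 \<le> 1 - S / 2" using s unfolding S_def by simp
    ultimately have "\<bar>cos ?y\<bar> \<le> 1 - S / 2" by (rule power2_le_imp_le)
    then show ?thesis unfolding S_def .
  qed
  then show ?thesis by (simp add: cis_sum_abs)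
qed

lemma sin_lower: assumes "0 \<le> x" "x \<le> pi/2" shows "sin x \<ge> x / 3"
proof -
  have "\<bar>sin x - (\<Sum>m<3. sin_coeff m * x ^ m)\<bar> \<le> inverse (fact 3) * \<bar>x\<bar> ^ 3"
    by (rule Maclaurin_sin_bound)
  moreover have "(\<Sum>m<3. sin_coeff m * x ^ m) = x"
    by (simp add: numeral_3_eq_3 lessThan_Suc sin_coeff_def)
  ultimately have "\<bar>sin x - x\<bar> * 6 \<le> x^3" using assms by (simp add: fact_numeral)
  moreover have "x - sin x \<le> \<bar>sin x - x\<bar>" by linarith
  ultimately have h: "sin x \<ge> x - x^3/6" by (simp add: field_simps)
  have "x^2 \<le> (pi/2)^2" using assms by (simp add: power_mono)
  moreover have "pi * pi \<le> 4 * 4" by (rule mult_mono) (use pi_less_4 in auto)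
  then have "(pi/2)^2 \<le> 4" by (simp add: power2_eq_square)
  ultimately have "x^2 \<le> 4" by linarith
  then have "x * x^2 \<le> x * 4" using assms by (simp add: mult_left_mono)
  then have "x^3/6 \<le> 2*x/3" by (simp add: power3_eq_cube power2_eq_square)
  then show ?thesis using h by linarith
qed

lemma sin_shift_int: "\<bar>sin (y + pi * of_int q)\<bar> = \<bar>sin y\<bar>"
proof -
  have c: "(cos (pi * of_int q))\<^sup>2 = 1" using sin_npi_int[of q] by (simp add: cos_squared_eq)
  have "\<bar>cos (pi * of_int q)\<bar> = 1" using c by (simp add: power2_eq_1_iff abs_if)
  then show ?thesis by (simp add: sin_add abs_mult)
qed

lemma sin_frac_lower:
  fixes g :: nat and r :: int
  assumes g: "g \<ge> 2" and nd: "\<not> int g dvd r"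
  shows "(sin (pi * of_int r / real g))\<^sup>2 \<ge> 1 / (real g)\<^sup>2"
proof -
  define s where "s = r mod int g"
  define q where "q = r div int g"
  have rq: "r = int g * q + s" unfolding s_def q_def by simp
  have s0: "0 < s" using nd g unfolding s_def by (simp add: dvd_eq_mod_eq_0 order_le_neq_trans)
  have sg: "s < int g" using g unfolding s_def by simp
  have gpos: "real g > 0" using g by simp
  have eq: "pi * of_int r / real g = pi * of_int s / real g + pi * of_int q"
    using gpos by (simp add: rq field_simps)
  have key: "\<exists>t::int. 1 \<le> t \<and> 2 * t \<le> int g \<and> \<bar>sin (pi * of_int s / real g)\<bar> = sin (pi * of_int t / real g)"
  proof (cases "2 * s \<le> int g")
    case True
    have "0 \<le> sin (pi * of_int s / real g)"
      by (rule sin_ge_zero) (use s0 sg gpos in \<open>auto simp: field_simps\<close>)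
    then show ?thesis using True s0 by (intro exI[of _ s]) auto
  next
    case False
    have e: "pi * of_int s / real g = pi - pi * of_int (int g - s) / real g"
      using gpos by (simp add: field_simps)
    have "0 \<le> sin (pi * of_int (int g - s) / real g)"
      by (rule sin_ge_zero) (use s0 sg gpos in \<open>auto simp: field_simps\<close>)
    then show ?thesis using False sg by (intro exI[of _ "int g - s"]) (auto simp: e)
  qed
  then obtain t where t: "1 \<le> t" "2 * t \<le> int g" "\<bar>sin (pi * of_int s / real g)\<bar> = sin (pi * of_int t / real g)" by blast
  have tl: "pi * of_int t / real g \<le> pi / 2"
  proof -
    have "real_of_int (2*t) \<le> real g" using t(2) by linarith
    then show ?thesis using gpos by (simp add: field_simps)
  qed
  have "sin (pi * of_int t / real g) \<ge> pi * of_int t / real g / 3"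
    by (rule sin_lower) (use t gpos tl in auto)
  moreover have "pi * of_int t / real g / 3 \<ge> 1 / real g"
  proof -
    have "pi * of_int t \<ge> 3 * 1" using pi_gt3 t(1) by (intro mult_mono) auto
    then show ?thesis using gpos by (simp add: field_simps)
  qed
  ultimately have "\<bar>sin (pi * of_int r / real g)\<bar> \<ge> 1 / real g"
    using t(3) by (simp add: eq sin_shift_int)
  then have "\<bar>sin (pi * of_int r / real g)\<bar>\<^sup>2 \<ge> (1 / real g)\<^sup>2"
    using gpos by (intro power_mono) auto
  then show ?thesis by (simp add: power_divide)
qed


lemma coord_sub: "coord_idx g k \<subseteq> {1..k} \<times> {1..k} \<times> {1..g-1}"
  unfolding coord_idx_def by (auto simp: subset_iff)

lemma finite_coord: "finite (coord_idx g k)"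
  using coord_sub by (rule finite_subset) auto

lemma card_coord: "card (coord_idx g k) \<le> k * k * g"
proof -
  have "card (coord_idx g k) \<le> card ({1..k} \<times> {1..k} \<times> {1..g-1})"
    by (rule card_mono[OF _ coord_sub]) simp
  also have "\<dots> = k * (k * (g - 1))" by (simp add: card_cartesian_product)
  also have "\<dots> \<le> k * k * g" by (simp add: mult_le_mono)
  finally show ?thesis .
qed

lemma finite_Zg: "finite (Zg_vecs g k)"
  unfolding Zg_vecs_def by (rule finite_PiE) auto

lemma card_Zg: "card (Zg_vecs g k) = g ^ k"
  unfolding Zg_vecs_def by (simp add: card_PiE)

definition Ind :: "nat \<Rightarrow> (nat \<Rightarrow> int) \<Rightarrow> nat \<times> nat \<times> nat \<Rightarrow> bool" where
  "Ind g x c = (case c of (i, j, a) \<Rightarrow> (x i - x j) mod int g = int a mod int g)"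

lemma Zmap_eq: "Zmap g x c = (if Ind g x c then 1 else 0) - 1 / real g"
  by (cases c) (auto simp: Zmap_def Ind_def)

lemma abs_Zmap: assumes "g \<ge> 1" shows "\<bar>Zmap g x c\<bar> \<le> 1"
proof -
  have "0 \<le> 1 / real g" "1 / real g \<le> 1" using assms by auto
  then show ?thesis by (auto simp: Zmap_eq)
qed

definition NN :: "nat \<Rightarrow> nat \<Rightarrow> (nat \<times> nat \<times> nat \<Rightarrow> int) \<Rightarrow> (nat \<Rightarrow> int) \<Rightarrow> int" where
  "NN g k q x = (\<Sum>c\<in>coord_idx g k. if Ind g x c then q c else 0)"

lemma sum_grid:
  assumes "real g > 0"
  shows "(\<Sum>c\<in>coord_idx g k. (2*pi * of_int (q c)/real g) * Zmap g x c)
     = 2*pi * of_int (NN g k q x)/real g - 2*pi/(real g)^2 * (\<Sum>c\<in>coord_idx g k. real_of_int (q c))"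
proof -
  have "(\<Sum>c\<in>coord_idx g k. (2*pi * of_int (q c)/real g) * Zmap g x c)
      = (\<Sum>c\<in>coord_idx g k. (2*pi/real g) * real_of_int (if Ind g x c then q c else 0) - (2*pi/(real g)^2) * real_of_int (q c))"
  proof (rule sum.cong)
    fix c assume "c \<in> coord_idx g k"
    show "(2*pi * of_int (q c)/real g) * Zmap g x c = (2*pi/real g) * real_of_int (if Ind g x c then q c else 0) - (2*pi/(real g)^2) * real_of_int (q c)"
      using assms by (cases "Ind g x c") (simp_all add: Zmap_eq field_simps power2_eq_square)
  qed simp
  also have "\<dots> = 2*pi * of_int (NN g k q x)/real g - 2*pi/(real g)^2 * (\<Sum>c\<in>coord_idx g k. real_of_int (q c))"
    unfolding sum_subtractf sum_distrib_left[symmetric] NN_def of_int_sum by simp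
  finally show ?thesis .
qed

lemma two_term_bound:
  fixes w :: "'a \<Rightarrow> complex"
  assumes "finite X" "a \<in> X" "b \<in> X" "a \<noteq> b" "\<And>x. x \<in> X \<Longrightarrow> norm (w x) \<le> 1"
  shows "norm (\<Sum>x\<in>X. w x) \<le> real (card X) - 2 + norm (w a + w b)"
proof -
  have split: "X = {a, b} \<union> (X - {a, b})" using assms by auto
  have "(\<Sum>x\<in>X. w x) = (\<Sum>x\<in>{a,b}. w x) + (\<Sum>x\<in>X - {a, b}. w x)"
    by (subst split, rule sum.union_disjoint) (use assms in auto)
  also have "(\<Sum>x\<in>{a,b}. w x) = w a + w b" using assms by simp
  finally have e: "(\<Sum>x\<in>X. w x) = w a + w b + (\<Sum>x\<in>X - {a, b}. w x)" .
  have "norm (\<Sum>x\<in>X - {a, b}. w x) \<le> (\<Sum>x\<in>X - {a, b}. norm (w x))" by (rule norm_sum)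
  also have "\<dots> \<le> (\<Sum>x\<in>X - {a, b}. 1)" by (rule sum_mono) (use assms in auto)
  also have "\<dots> = real (card (X - {a,b}))" by simp
  also have "card (X - {a,b}) = card X - 2" using assms by (simp add: card_Diff_subset)
  also have "real (card X - 2) = real (card X) - 2"
  proof -
    have "card {a,b} \<le> card X" using assms by (intro card_mono) auto
    then have "2 \<le> card X" using assms by simp
    then show ?thesis by simp
  qed
  finally show ?thesis unfolding e using norm_triangle_ineq[of "w a + w b" "sum w (X - {a, b})"] by linarith
qed

lemma pert_bound: "norm (cis (a + e) + cis (b + f)) \<le> norm (cis a + cis b) + \<bar>e\<bar> + \<bar>f\<bar>"
proof -
  have eq: "cis (a + e) + cis (b + f) = (cis a + cis b) + (cis (a + e) - cis a) + (cis (b + f) - cis b)"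
    by simp
  then have eqn: "norm (cis (a + e) + cis (b + f)) = norm ((cis a + cis b) + (cis (a + e) - cis a) + (cis (b + f) - cis b))"
    by (rule arg_cong)
  moreover have "norm (cis (a + e) - cis a) \<le> \<bar>e\<bar>" using cis_diff_le[of "a+e" a] by simp
  moreover have "norm (cis (b + f) - cis b) \<le> \<bar>f\<bar>" using cis_diff_le[of "b+f" b] by simp
  moreover have "norm ((cis a + cis b) + (cis (a + e) - cis a) + (cis (b + f) - cis b))
     \<le> norm (cis a + cis b) + norm (cis (a + e) - cis a) + norm (cis (b + f) - cis b)"
    by (meson add_mono norm_triangle_ineq order_trans order_refl)
  ultimately show ?thesis unfolding eqn by linarith
qed

theorem lemma3p1:
  fixes g k :: nat and \<delta> :: real and \<theta> :: "nat \<times> nat \<times> nat \<Rightarrow> real"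
  assumes "g \<ge> 2" and "k \<ge> 2"
    and "0 < \<delta>" and "\<delta> < 8 / 5 * (1 / real g ^ (k + 3)) * (1 / real k ^ 2)"
    and "\<theta> \<in> RA g k \<delta>"
  shows "norm (Phi g k \<theta>) \<le> 1 - 1 / 10 * (1 / real g ^ (k + 2))"
proof -
  let ?C = "coord_idx g k"
  let ?X = "Zg_vecs g k"
  have gpos: "real g > 0" using assms(1) by simp
  from assms(5) obtain \<eta> where \<eta>12: "\<eta> \<in> Lgrid g k - Lambda0 g k"
      and \<eta>3: "\<theta> \<in> Bdelta g k \<delta> \<eta>"
    unfolding RA_def by (rule UN_E)
  from \<eta>12 have \<eta>1: "\<eta> \<in> Lgrid g k" and \<eta>2: "\<eta> \<notin> Lambda0 g k" by simp_all
  from \<eta>3 obtain \<zeta> where \<zeta>: "\<forall>c\<in>?C. \<bar>\<zeta> c\<bar> < \<delta> \<and> (\<exists>m::int. \<theta> c = \<eta> c + \<zeta> c + 2 * pi * of_int m)"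
    unfolding Bdelta_def mem_Collect_eq by (elim conjE exE)
  have hm: "\<forall>c\<in>?C. \<exists>m::int. \<theta> c = \<eta> c + \<zeta> c + 2 * pi * of_int m" using \<zeta> by simp
  obtain m where m: "\<forall>c\<in>?C. \<theta> c = \<eta> c + \<zeta> c + 2 * pi * of_int (m c)"
    using bchoice[OF hm] by (elim exE)
  from \<eta>1 have hn: "\<forall>c\<in>?C. \<exists>n::int. \<eta> c = 2 * pi * of_int n / real g" unfolding Lgrid_def by simp
  obtain n where n: "\<forall>c\<in>?C. \<eta> c = 2 * pi * of_int (n c) / real g"
    using bchoice[OF hn] by (elim exE)
  define p where "p c = n c + int g * m c" for c
  have \<theta>p: "\<theta> c = 2*pi * of_int (p c)/real g + \<zeta> c" if "c \<in> ?C" for c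
  proof -
    have "\<theta> c = 2 * pi * of_int (n c) / real g + \<zeta> c + 2 * pi * of_int (m c)" using m n that by simp
    also have "\<dots> = 2*pi * of_int (p c)/real g + \<zeta> c" using gpos by (simp add: p_def field_simps)
    finally show ?thesis .
  qed
  define E where "E x = (\<Sum>c\<in>?C. \<zeta> c * Zmap g x c)" for x
  define K where "K = 2*pi/(real g)^2 * (\<Sum>c\<in>?C. real_of_int (p c))"
  define A where "A x = 2*pi * of_int (NN g k p x)/real g - K" for x
  have T: "(\<Sum>c\<in>?C. \<theta> c * Zmap g x c) = A x + E x" for x
  proof -
    have "(\<Sum>c\<in>?C. \<theta> c * Zmap g x c) = (\<Sum>c\<in>?C. (2*pi * of_int (p c)/real g) * Zmap g x c + \<zeta> c * Zmap g x c)"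
      by (rule sum.cong) (auto simp: \<theta>p distrib_right)
    also have "\<dots> = A x + E x"
      by (simp only: sum.distrib sum_grid[OF gpos]) (simp add: A_def K_def E_def)
    finally show ?thesis .
  qed
  have Eb: "\<bar>E x\<bar> \<le> \<delta> * (real k * real k * real g)" for x
  proof -
    have "\<bar>E x\<bar> \<le> (\<Sum>c\<in>?C. \<bar>\<zeta> c * Zmap g x c\<bar>)" unfolding E_def by (rule sum_abs)
    also have "\<dots> \<le> (\<Sum>c\<in>?C. \<delta>)"
    proof (rule sum_mono)
      fix c assume c: "c \<in> ?C"
      have "\<bar>\<zeta> c\<bar> * \<bar>Zmap g x c\<bar> \<le> \<delta> * 1"
        using \<zeta> c abs_Zmap[of g x c] assms(1) by (intro mult_mono) auto
      then show "\<bar>\<zeta> c * Zmap g x c\<bar> \<le> \<delta>" by (simp add: abs_mult)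
    qed
    also have "\<dots> = \<delta> * real (card ?C)" by simp
    also have "\<dots> \<le> \<delta> * (real k * real k * real g)"
    proof -
      have "real (card ?C) \<le> real (k * k * g)" using card_coord by (simp only: of_nat_le_iff)
      then show ?thesis using assms(3) by (intro mult_left_mono) auto
    qed
    finally show ?thesis .
  qed
  have cardX: "real (card ?X) = real g ^ k" by (simp add: card_Zg)
  have "\<exists>x0\<in>?X. \<exists>y0\<in>?X. \<not> int g dvd (NN g k n y0 - NN g k n x0)"
  proof (rule ccontr)
    assume H: "\<not> ?thesis"
    have "card ?X > 0" using card_Zg[of g k] assms(1) by simp
    then have "?X \<noteq> {}" by (intro notI) simp
    then obtain x0 where x0: "x0 \<in> ?X" by blast
    define Kn where "Kn = 2*pi/(real g)^2 * (\<Sum>c\<in>?C. real_of_int (n c))"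
    have S: "(\<Sum>c\<in>?C. \<eta> c * Zmap g x c) = 2*pi * of_int (NN g k n x)/real g - Kn" for x
    proof -
      have "(\<Sum>c\<in>?C. \<eta> c * Zmap g x c) = (\<Sum>c\<in>?C. (2*pi * of_int (n c)/real g) * Zmap g x c)"
        by (rule sum.cong) (simp_all add: n)
      also have "\<dots> = 2*pi * of_int (NN g k n x)/real g - Kn" unfolding Kn_def by (rule sum_grid[OF gpos])
      finally show ?thesis .
    qed
    have cs: "cis (\<Sum>c\<in>?C. \<eta> c * Zmap g x c) = cis (2*pi * of_int (NN g k n x0)/real g - Kn)"
      if x: "x \<in> ?X" for x
    proof -
      from H x x0 have "int g dvd (NN g k n x - NN g k n x0)" by blast
      then obtain t where t: "NN g k n x - NN g k n x0 = int g * t" by (meson dvdE)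
      have "real_of_int (NN g k n x) = real_of_int (NN g k n x0 + int g * t)"
        using t by (simp add: algebra_simps)
      then have e: "2*pi * of_int (NN g k n x)/real g - Kn = (2*pi * of_int (NN g k n x0)/real g - Kn) + 2*pi * of_int t"
        using gpos by (simp add: field_simps)
      have c1: "cis (2 * pi * real_of_int t) = 1" by (rule cis_multiple_2pi) simp
      have "cis ((2*pi * of_int (NN g k n x0)/real g - Kn) + 2*pi * of_int t)
          = cis (2*pi * of_int (NN g k n x0)/real g - Kn) * cis (2*pi * of_int t)"
        by (rule cis_mult[symmetric])
      then show ?thesis unfolding S e c1 by simp
    qed
    have "Phi g k \<eta> = (\<Sum>x\<in>?X. complex_of_real (1 / real g ^ k) * cis (2*pi * of_int (NN g k n x0)/real g - Kn))"
      unfolding Phi_def by (rule sum.cong) (simp_all add: cs)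
    also have "\<dots> = of_nat (card ?X) * complex_of_real (1 / real g ^ k) * cis (2*pi * of_int (NN g k n x0)/real g - Kn)"
      by simp
    also have "of_nat (card ?X) * complex_of_real (1 / real g ^ k) = 1"
      using gpos by (simp add: card_Zg field_simps)
    finally have "Phi g k \<eta> = cis (2*pi * of_int (NN g k n x0)/real g - Kn)" by simp
    then have "norm (Phi g k \<eta>) = 1" by simp
    with \<eta>1 have "\<eta> \<in> Lambda0 g k" unfolding Lambda0_def Lgrid_def by auto
    with \<eta>2 show False by simp
  qed
  then obtain x0 y0 where x0: "x0 \<in> ?X" and y0: "y0 \<in> ?X"
    and nd: "\<not> int g dvd (NN g k n y0 - NN g k n x0)" by blast
  define Sm where "Sm x = (\<Sum>c\<in>?C. if Ind g x c then m c else 0)" for x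
  have NNp: "NN g k p x = NN g k n x + int g * Sm x" for x
  proof -
    have "NN g k p x = (\<Sum>c\<in>?C. (if Ind g x c then n c else 0) + int g * (if Ind g x c then m c else 0))"
      unfolding NN_def by (rule sum.cong) (auto simp: p_def)
    then show ?thesis by (simp add: sum.distrib sum_distrib_left NN_def Sm_def)
  qed
  have nd2: "\<not> int g dvd (NN g k p y0 - NN g k p x0)"
  proof
    assume "int g dvd (NN g k p y0 - NN g k p x0)"
    moreover have "NN g k p y0 - NN g k p x0 = (NN g k n y0 - NN g k n x0) + int g * (Sm y0 - Sm x0)"
      by (simp add: NNp algebra_simps)
    ultimately have "int g dvd (NN g k n y0 - NN g k n x0) + int g * (Sm y0 - Sm x0)" by simp
    then have "int g dvd ((NN g k n y0 - NN g k n x0) + int g * (Sm y0 - Sm x0)) - int g * (Sm y0 - Sm x0)"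
      by (rule dvd_diff) simp
    then have "int g dvd (NN g k n y0 - NN g k n x0)" by simp
    with nd show False by simp
  qed
  have xy: "x0 \<noteq> y0" using nd2 by auto
  have sinb: "(sin ((A y0 - A x0)/2))\<^sup>2 \<ge> 1/(real g)\<^sup>2"
  proof -
    have "(A y0 - A x0)/2 = pi * of_int (NN g k p y0 - NN g k p x0) / real g"
      unfolding A_def using gpos by (simp add: field_simps)
    then show ?thesis using sin_frac_lower[OF assms(1) nd2] by simp
  qed
  let ?N = "norm (\<Sum>x\<in>?X. cis (A x + E x))"
  have N1: "?N \<le> real (card ?X) - 2 + norm (cis (A y0 + E y0) + cis (A x0 + E x0))"
    by (rule two_term_bound) (use finite_Zg x0 y0 xy in auto)
  have N2: "norm (cis (A y0 + E y0) + cis (A x0 + E x0)) \<le> 2 - 1/(real g)\<^sup>2 + 2 * (\<delta> * (real k * real k * real g))"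
    using pert_bound[of "A y0" "E y0" "A x0" "E x0"] cis_sum_le[of "A y0" "A x0"] sinb Eb[of x0] Eb[of y0]
    by linarith
  have Phi_eq: "Phi g k \<theta> = complex_of_real (1 / real g ^ k) * (\<Sum>x\<in>?X. cis (A x + E x))"
    unfolding Phi_def by (simp add: T sum_distrib_left)
  have normPhi: "norm (Phi g k \<theta>) = ?N / real g ^ k"
    unfolding Phi_eq norm_mult norm_of_real by simp
  define G where "G = real g ^ k"
  have G4: "G \<ge> 4"
  proof -
    have "real g ^ k \<ge> 2 ^ k" using assms(1) by (intro power_mono) auto
    moreover have "(2::real) ^ k \<ge> 2 ^ 2" using assms(2) by (intro power_increasing) auto
    ultimately show ?thesis unfolding G_def by simp
  qed
  define u where "u = 1 / (G * (real g)\<^sup>2)"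
  have u0: "u > 0" unfolding u_def using G4 gpos by simp
  have gk2: "real g ^ (k + 2) = G * (real g)\<^sup>2" unfolding G_def by (rule power_add)
  have gk3: "real g ^ (k + 3) = G * (real g)\<^sup>2 * real g"
  proof -
    have "real g ^ (k + 3) = real g ^ (k + 2) * real g" by (simp add: power_add numeral_3_eq_3 power2_eq_square)
    then show ?thesis using gk2 by simp
  qed
  have kpos: "real k > 0" using assms(2) by simp
  have dl: "\<delta> * (real k * real k * real g) < 8/5 * u"
  proof -
    have "\<delta> * (real k * real k * real g) < (8 / 5 * (1 / real g ^ (k + 3)) * (1 / real k ^ 2)) * (real k * real k * real g)"
      using assms(4) kpos gpos by (intro mult_strict_right_mono) auto
    also have "\<dots> = 8/5 * u" unfolding u_def gk3 using kpos gpos G4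
      by (simp add: field_simps power2_eq_square)
    finally show ?thesis .
  qed
  have Nb: "?N \<le> G - G * u + 16/5 * u"
  proof -
    have "1/(real g)\<^sup>2 = G * u" unfolding u_def using G4 gpos by (simp add: field_simps)
    then show ?thesis using N1 N2 dl cardX unfolding G_def by linarith
  qed
  have "?N / G \<le> 1 - u + 16/5 * u / G"
    using Nb G4 by (simp add: field_simps)
  also have "16/5 * u / G \<le> 4/5 * u" using G4 u0 by (simp add: field_simps)
  finally have "?N / G \<le> 1 - 1/10 * u" using u0 by linarith
  then show ?thesis using normPhi unfolding G_def u_def gk2 by simp
qed

end
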